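(* Let $w/u$ be a skew partition of length $r$, $v$ a partition with $|v|=\operatorname{card}\mathcal D(w/u)$, and $c=(c_1,c_2):\mathcal D(w/u)\to Y(v)$ a bijection with inverse $b=(b_1,b_2)$. Then $c$ satisfies the LR rules if and only if all of the following hold: (h) for $(i,j),(i',j)\in\mathcal D(w/u)$ with $i<i'$: $c_1(i,j)<c_1(i',j)$; (th) for $(i,j),(i',j)\in\mathcal D(w/u)$ with $i<i'$: $c_2(i,j)\ge c_2(i',j)$; (w) for $(i,j),(i,j')\in\mathcal D(w/u)$ with $j<j'$: $c_2(i,j)>c_2(i,j')$; (tw) for $(i,j),(i,j')\in\mathcal D(w/u)$ with $j<j'$: $c_1(i,j)\le c_1(i,j')$; (h') for $(i,j),(i',j)\in Y(v)$ with $i<i'$: $b_1(i,j)<b_1(i',j)$; (th') for $(i,j),(i',j)\in Y(v)$ with $i<i'$: $b_2(i,j)\ge b_2(i',j)$; (w') for $(i,j),(i,j')\in Y(v)$ with $j<j'$: $b_2(i,j)>b_2(i,j')$; (tw') for $(i,j),(i,j')\in Y(v)$ with $j<j'$: $b_1(i,j)\le b_1(i,j')$.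
   Context: A generalized partition of length $r$ is a weakly decreasing sequence $u=(u_1,\dots,u_r)$ of integers; its diagram is $\mathcal D(u)=\{(i,j)\in\{1,\dots,r\}\times\mathbb Z: j\le u_i\}$. If $\mathcal D(u)\subset\mathcal D(w)$, the pair forms a skew partition $w/u$ with diagram $\mathcal D(w/u)=\mathcal D(w)\setminus\mathcal D(u)$. For an ordinary partition $v$, $Y(v)=\{(i,j): i\ge1,\ 1\le j\le v_i\}$. For $(i,j)$, $i$ is the height (row index) and $j$ the width (column index). The Littlewood–Richardson order on $\mathcal D(w/u)$ is the total order with $(i,j)<_{LR}(i',j')$ if $i<i'$, and $(i,j)<_{LR}(i,j')$ if $j>j'$. For $x\in\mathcal D(w/u)$ put $C(x)=\{c(y): y\le_{LR}x\}$. A bijection $c=(c_1,c_2):\mathcal D(w/u)\to Y(v)$ satisfies the LR rules iff (L1) $c_1$ is strictly increasing (in the height) on each column of $\mathcal D(w/u)$, (L2) $c_1$ is weakly increasing (in the width) on each row of $\mathcal D(w/u)$, and (Y) for each $x\in\mathcal D(w/u)$, $C(x)$ is a Young diagram, i.e. equals $Y(\mu)$ for some partition $\mu$. *)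

theory Defs
  imports Main
begin

text \<open>Generalized partition of length r: weakly decreasing u_1,...,u_r of integers
  (represented as a function on nat, only indices 1..r matter).\<close>
definition gen_partition :: "nat \<Rightarrow> (nat \<Rightarrow> int) \<Rightarrow> bool" where
  "gen_partition r u \<longleftrightarrow> (\<forall>i j. 1 \<le> i \<longrightarrow> i \<le> j \<longrightarrow> j \<le> r \<longrightarrow> u j \<le> u i)"

definition gdiagram :: "nat \<Rightarrow> (nat \<Rightarrow> int) \<Rightarrow> (nat \<times> int) set" where
  "gdiagram r u = {(i, j). 1 \<le> i \<and> i \<le> r \<and> j \<le> u i}"

definition skew_partition :: "nat \<Rightarrow> (nat \<Rightarrow> int) \<Rightarrow> (nat \<Rightarrow> int) \<Rightarrow> bool" where
  "skew_partition r w u \<longleftrightarrow> gen_partition r w \<and> gen_partition r u \<and> gdiagram r u \<subseteq> gdiagram r w"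

definition skew_diagram :: "nat \<Rightarrow> (nat \<Rightarrow> int) \<Rightarrow> (nat \<Rightarrow> int) \<Rightarrow> (nat \<times> int) set" where
  "skew_diagram r w u = gdiagram r w - gdiagram r u"

text \<open>Ordinary partition v_1 \<ge> v_2 \<ge> ... \<ge> 0, finitely many nonzero parts (index 0 ignored).\<close>
definition is_partition :: "(nat \<Rightarrow> nat) \<Rightarrow> bool" where
  "is_partition v \<longleftrightarrow> (\<forall>i j. 1 \<le> i \<longrightarrow> i \<le> j \<longrightarrow> v j \<le> v i) \<and> finite {i. 1 \<le> i \<and> v i \<noteq> 0}"

definition partition_size :: "(nat \<Rightarrow> nat) \<Rightarrow> nat" where
  "partition_size v = (\<Sum>i\<in>{i. 1 \<le> i \<and> v i \<noteq> 0}. v i)"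

definition young :: "(nat \<Rightarrow> nat) \<Rightarrow> (nat \<times> nat) set" where
  "young v = {(i, j). 1 \<le> i \<and> 1 \<le> j \<and> j \<le> v i}"

definition is_young_diagram :: "(nat \<times> nat) set \<Rightarrow> bool" where
  "is_young_diagram S \<longleftrightarrow> (\<exists>\<mu>. is_partition \<mu> \<and> S = young \<mu>)"

definition lr_le :: "nat \<times> int \<Rightarrow> nat \<times> int \<Rightarrow> bool" where
  "lr_le x y \<longleftrightarrow> fst x < fst y \<or> (fst x = fst y \<and> snd x \<ge> snd y)"

definition LR_rules :: "nat \<Rightarrow> (nat \<Rightarrow> int) \<Rightarrow> (nat \<Rightarrow> int) \<Rightarrow> (nat \<times> int \<Rightarrow> nat \<times> nat) \<Rightarrow> bool" where
  "LR_rules r w u c \<longleftrightarrow>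
     (\<forall>i i' j. (i, j) \<in> skew_diagram r w u \<longrightarrow> (i', j) \<in> skew_diagram r w u \<longrightarrow> i < i'
        \<longrightarrow> fst (c (i, j)) < fst (c (i', j))) \<and>
     (\<forall>i j j'. (i, j) \<in> skew_diagram r w u \<longrightarrow> (i, j') \<in> skew_diagram r w u \<longrightarrow> j < j'
        \<longrightarrow> fst (c (i, j)) \<le> fst (c (i, j'))) \<and>
     (\<forall>x \<in> skew_diagram r w u.
        is_young_diagram (c ` {y \<in> skew_diagram r w u. lr_le y x}))"

end

theory Submission imports Defs begin
lemma lr_le_trans: "lr_le x y \<Longrightarrow> lr_le y z \<Longrightarrow> lr_le x z"
  by (auto simp: lr_le_def)

lemma lr_le_antisym: "lr_le x y \<Longrightarrow> lr_le y x \<Longrightarrow> x = y"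
  by (cases x; cases y) (auto simp: lr_le_def)

lemma lr_le_refl: "lr_le x x"
  by (auto simp: lr_le_def)

lemma young_down:
  assumes "is_young_diagram S" "(a', k') \<in> S" "1 \<le> a" "a \<le> a'" "1 \<le> k" "k \<le> k'"
  shows "(a, k) \<in> S"
proof -
  obtain \<mu> where m: "is_partition \<mu>" "S = young \<mu>" using assms(1) is_young_diagram_def by blast
  have "k' \<le> \<mu> a'" using assms(2) m(2) by (auto simp: young_def)
  moreover have "\<mu> a' \<le> \<mu> a" using m(1) assms(3,4) by (auto simp: is_partition_def)
  ultimately show ?thesis using m(2) assms(3,5,6) by (auto simp: young_def)
qed

lemma young_char:
  assumes fin: "finite S" and pos: "\<And>a k. (a, k) \<in> S \<Longrightarrow> 1 \<le> a \<and> 1 \<le> k"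
    and down: "\<And>a k a' k'. (a', k') \<in> S \<Longrightarrow> 1 \<le> a \<Longrightarrow> a \<le> a' \<Longrightarrow> 1 \<le> k \<Longrightarrow> k \<le> k' \<Longrightarrow> (a, k) \<in> S"
  shows "is_young_diagram S"
proof -
  define \<mu> where "\<mu> a = Max (insert 0 {k. (a, k) \<in> S})" for a
  have finr: "finite {k. (a, k) \<in> S}" for a
    by (rule finite_subset[of _ "snd ` S"]) (force intro: fin)+
  have ge: "(a, k) \<in> S \<Longrightarrow> k \<le> \<mu> a" for a k
    unfolding \<mu>_def using finr[of a] by (simp add: Max_ge_iff)
  have inS: "\<mu> a \<noteq> 0 \<Longrightarrow> (a, \<mu> a) \<in> S" for a
  proof -
    assume "\<mu> a \<noteq> 0"
    have "\<mu> a \<in> insert 0 {k. (a, k) \<in> S}" unfolding \<mu>_def using finr[of a] by (intro Max_in) auto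
    thus ?thesis using \<open>\<mu> a \<noteq> 0\<close> by auto
  qed
  have "S = young \<mu>"
  proof
    show "S \<subseteq> young \<mu>" using pos ge by (auto simp: young_def)
    show "young \<mu> \<subseteq> S"
    proof
      fix x assume "x \<in> young \<mu>"
      then obtain a k where x: "x = (a, k)" "1 \<le> a" "1 \<le> k" "k \<le> \<mu> a" by (auto simp: young_def)
      then have "(a, \<mu> a) \<in> S" using inS by auto
      thus "x \<in> S" using down[of a "\<mu> a" a k] x by auto
    qed
  qed
  moreover have "is_partition \<mu>"
    unfolding is_partition_def
  proof
    show "\<forall>i j. 1 \<le> i \<longrightarrow> i \<le> j \<longrightarrow> \<mu> j \<le> \<mu> i"
    proof (intro allI impI)
      fix i j :: nat assume "1 \<le> i" "i \<le> j"
      show "\<mu> j \<le> \<mu> i"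
      proof (cases "\<mu> j = 0")
        case False
        then have "(j, \<mu> j) \<in> S" by (rule inS)
        then have "(i, \<mu> j) \<in> S" using down[of j "\<mu> j" i "\<mu> j"] \<open>1 \<le> i\<close> \<open>i \<le> j\<close> False by auto
        thus ?thesis by (rule ge)
      qed auto
    qed
    show "finite {i. 1 \<le> i \<and> \<mu> i \<noteq> 0}"
      by (rule finite_subset[of _ "fst ` S"]) (use inS fin in force)+
  qed
  ultimately show ?thesis unfolding is_young_diagram_def by blast
qed

theorem proposition4p11:
  fixes r :: nat and w u :: "nat \<Rightarrow> int" and v :: "nat \<Rightarrow> nat"
    and c :: "nat \<times> int \<Rightarrow> nat \<times> nat" and b :: "nat \<times> nat \<Rightarrow> nat \<times> int"
  assumes "skew_partition r w u"
    and "is_partition v"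
    and "partition_size v = card (skew_diagram r w u)"
    and "bij_betw c (skew_diagram r w u) (young v)"
    and "\<forall>x \<in> skew_diagram r w u. b (c x) = x"
    and "\<forall>y \<in> young v. c (b y) = y"
  shows "LR_rules r w u c \<longleftrightarrow>
     (\<forall>i i' j. (i, j) \<in> skew_diagram r w u \<longrightarrow> (i', j) \<in> skew_diagram r w u \<longrightarrow> i < i'
        \<longrightarrow> fst (c (i, j)) < fst (c (i', j))) \<and>
     (\<forall>i i' j. (i, j) \<in> skew_diagram r w u \<longrightarrow> (i', j) \<in> skew_diagram r w u \<longrightarrow> i < i'
        \<longrightarrow> snd (c (i, j)) \<ge> snd (c (i', j))) \<and>
     (\<forall>i j j'. (i, j) \<in> skew_diagram r w u \<longrightarrow> (i, j') \<in> skew_diagram r w u \<longrightarrow> j < j'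
        \<longrightarrow> snd (c (i, j)) > snd (c (i, j'))) \<and>
     (\<forall>i j j'. (i, j) \<in> skew_diagram r w u \<longrightarrow> (i, j') \<in> skew_diagram r w u \<longrightarrow> j < j'
        \<longrightarrow> fst (c (i, j)) \<le> fst (c (i, j'))) \<and>
     (\<forall>i i' j. (i, j) \<in> young v \<longrightarrow> (i', j) \<in> young v \<longrightarrow> i < i'
        \<longrightarrow> fst (b (i, j)) < fst (b (i', j))) \<and>
     (\<forall>i i' j. (i, j) \<in> young v \<longrightarrow> (i', j) \<in> young v \<longrightarrow> i < i'
        \<longrightarrow> snd (b (i, j)) \<ge> snd (b (i', j))) \<and>
     (\<forall>i j j'. (i, j) \<in> young v \<longrightarrow> (i, j') \<in> young v \<longrightarrow> j < j'
        \<longrightarrow> snd (b (i, j)) > snd (b (i, j'))) \<and>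
     (\<forall>i j j'. (i, j) \<in> young v \<longrightarrow> (i, j') \<in> young v \<longrightarrow> j < j'
        \<longrightarrow> fst (b (i, j)) \<le> fst (b (i, j')))"
proof -
  define D where "D = skew_diagram r w u"
  define Y where "Y = young v"
  have Dmem: "(i, j) \<in> D \<longleftrightarrow> 1 \<le> i \<and> i \<le> r \<and> u i < j \<and> j \<le> w i" for i j
    by (auto simp: D_def skew_diagram_def gdiagram_def)
  have Ymem: "(a, k) \<in> Y \<longleftrightarrow> 1 \<le> a \<and> 1 \<le> k \<and> k \<le> v a" for a k
    by (auto simp: Y_def young_def)
  have wm: "1 \<le> i \<Longrightarrow> i \<le> i' \<Longrightarrow> i' \<le> r \<Longrightarrow> w i' \<le> w i" for i i'
    using assms(1) by (auto simp: skew_partition_def gen_partition_def)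
  have um: "1 \<le> i \<Longrightarrow> i \<le> i' \<Longrightarrow> i' \<le> r \<Longrightarrow> u i' \<le> u i" for i i'
    using assms(1) by (auto simp: skew_partition_def gen_partition_def)
  have shape1: "(p', q) \<in> D" if "(p, q) \<in> D" "(p', q') \<in> D" "p < p'" "q \<le> q'" for p q p' q'
    using that um[of p p'] wm[of p p'] by (auto simp: Dmem)
  have shape2: "(p, q') \<in> D" if "(p, q) \<in> D" "(p', q') \<in> D" "p < p'" "q < q'" for p q p' q'
    using that um[of p p'] wm[of p p'] by (auto simp: Dmem)
  have cY: "x \<in> D \<Longrightarrow> c x \<in> Y" for x using assms(4) unfolding D_def Y_def bij_betw_def by auto
  have bc: "x \<in> D \<Longrightarrow> b (c x) = x" for x using assms(5) D_def by auto
  have cb: "y \<in> Y \<Longrightarrow> c (b y) = y" for y using assms(6) Y_def by auto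
  have bD: "y \<in> Y \<Longrightarrow> b y \<in> D" for y
  proof -
    assume "y \<in> Y"
    then obtain x where "x \<in> D" "y = c x" using assms(4) unfolding D_def Y_def bij_betw_def by blast
    thus ?thesis using bc by auto
  qed
  have finD: "finite D"
  proof (rule finite_subset)
    show "D \<subseteq> (\<Union>i\<in>{1..r}. {i} \<times> {u i<..w i})" by (auto simp: Dmem)
  qed auto
  have Yd: "(a, k) \<in> Y" if "(a', k') \<in> Y" "1 \<le> a" "a \<le> a'" "1 \<le> k" "k \<le> k'" for a k a' k'
    using that assms(2) unfolding is_partition_def Ymem by (metis order_trans)
  show ?thesis unfolding D_def[symmetric] Y_def[symmetric]
  proof (rule iffI)
    assume LR: "LR_rules r w u c"
    have L1: "\<And>i i' j. (i, j) \<in> D \<Longrightarrow> (i', j) \<in> D \<Longrightarrow> i < i' \<Longrightarrow> fst (c (i, j)) < fst (c (i', j))"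
      using LR unfolding LR_rules_def D_def by blast
    have L2: "\<And>i j j'. (i, j) \<in> D \<Longrightarrow> (i, j') \<in> D \<Longrightarrow> j < j' \<Longrightarrow> fst (c (i, j)) \<le> fst (c (i, j'))"
      using LR unfolding LR_rules_def D_def by blast
    have LY: "\<And>x. x \<in> D \<Longrightarrow> is_young_diagram (c ` {y \<in> D. lr_le y x})"
      using LR unfolding LR_rules_def D_def by blast
    have F1: "(a, k) \<in> Y \<and> lr_le (b (a, k)) x"
      if "x \<in> D" "1 \<le> a" "a \<le> fst (c x)" "1 \<le> k" "k \<le> snd (c x)" for x a k
    proof -
      have "c x \<in> c ` {y \<in> D. lr_le y x}" using that(1) lr_le_refl by blast
      then have "(fst (c x), snd (c x)) \<in> c ` {y \<in> D. lr_le y x}" by simp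
      then have "(a, k) \<in> c ` {y \<in> D. lr_le y x}"
        using young_down[OF LY[OF that(1)]] that by blast
      then obtain z where z: "z \<in> D" "lr_le z x" "(a, k) = c z" by blast
      then show ?thesis using bc cY by metis
    qed
    have W: "snd (c (i, j)) > snd (c (i, j'))" if "(i, j) \<in> D" "(i, j') \<in> D" "j < j'" for i j j'
    proof (rule ccontr)
      assume "\<not> ?thesis"
      moreover have "fst (c (i, j)) \<le> fst (c (i, j'))" using L2 that by blast
      moreover have "c (i, j) \<in> Y" using cY that by blast
      ultimately have "lr_le (b (fst (c (i, j)), snd (c (i, j)))) (i, j')"
        using F1[of "(i, j')" "fst (c (i, j))" "snd (c (i, j))"] that(2)
        by (cases "c (i, j)") (auto simp: Ymem)
      then have "lr_le (i, j) (i, j')" using bc that(1) by simp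
      thus False using that(3) by (auto simp: lr_le_def)
    qed
    have Hp: "fst (b (a, k)) < fst (b (a', k))" if "(a, k) \<in> Y" "(a', k) \<in> Y" "a < a'" for a a' k
    proof -
      have x: "b (a', k) \<in> D" "c (b (a', k)) = (a', k)" using that bD cb by auto
      have le: "lr_le (b (a, k)) (b (a', k))" using F1[OF x(1), of a k] that x(2) by (auto simp: Ymem)
      obtain p q where pq: "b (a, k) = (p, q)" by (cases "b (a, k)")
      obtain p' q' where pq': "b (a', k) = (p', q')" by (cases "b (a', k)")
      have ne: "b (a, k) \<noteq> b (a', k)" using cb that by (metis prod.inject less_irrefl)
      show ?thesis
      proof (rule ccontr)
        assume "\<not> ?thesis"
        then have "p = p'" "q > q'" using le ne pq pq' by (auto simp: lr_le_def)
        then have "fst (c (p, q')) \<le> fst (c (p, q))" using L2 bD that pq pq' by (metis)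
        then show False using cb that pq pq' \<open>p = p'\<close> by (metis fst_conv not_le)
      qed
    qed
    have TWp: "fst (b (a, k)) \<le> fst (b (a, k'))" "lr_le (b (a, k)) (b (a, k'))"
      if "(a, k) \<in> Y" "(a, k') \<in> Y" "k < k'" for a k k'
    proof -
      have x: "b (a, k') \<in> D" "c (b (a, k')) = (a, k')" using that bD cb by auto
      show "lr_le (b (a, k)) (b (a, k'))" using F1[OF x(1), of a k] that x(2) by (auto simp: Ymem)
      then show "fst (b (a, k)) \<le> fst (b (a, k'))" by (auto simp: lr_le_def)
    qed
    have Wp: "snd (b (a, k)) > snd (b (a, k'))" if "(a, k) \<in> Y" "(a, k') \<in> Y" "k < k'" for a k k'
    proof -
      obtain p q where pq: "b (a, k) = (p, q)" by (cases "b (a, k)")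
      obtain p' q' where pq': "b (a, k') = (p', q')" by (cases "b (a, k')")
      have le: "lr_le (p, q) (p', q')" using TWp(2)[OF that] pq pq' by simp
      have ne: "(p, q) \<noteq> (p', q')" using cb that pq pq' by (metis prod.inject less_irrefl)
      have D1: "(p, q) \<in> D" "(p', q') \<in> D" using bD that pq pq' by metis+
      have c1: "c (p, q) = (a, k)" "c (p', q') = (a, k')" using cb that pq pq' by metis+
      show ?thesis
      proof (rule ccontr)
        assume "\<not> ?thesis"
        then have qq: "q \<le> q'" using pq pq' by simp
        then have pp: "p < p'" using le ne by (auto simp: lr_le_def)
        have D2: "(p', q) \<in> D" using shape1[OF D1 pp qq] .
        have "a < fst (c (p', q))" using L1[OF D1(1) D2 pp] c1 by simp
        moreover have "fst (c (p', q)) \<le> a"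
        proof (cases "q = q'")
          case True thus ?thesis using c1 by simp
        next
          case False thus ?thesis using L2[OF D2 D1(2)] qq c1 by simp
        qed
        ultimately show False by simp
      qed
    qed
    have TH: "snd (c (i', j)) \<le> snd (c (i, j))"
      if "(i, j) \<in> D" "(i', j) \<in> D" "i < i'" for i i' j
    proof -
      have "\<forall>i i' j. nat (j - u r) = n \<longrightarrow> (i, j) \<in> D \<longrightarrow> (i', j) \<in> D \<longrightarrow> i < i' \<longrightarrow>
              snd (c (i', j)) \<le> snd (c (i, j))" for n
      proof (induction n rule: less_induct)
        case (less n)
        show ?case
        proof (intro allI impI)
          fix i i' j assume n: "nat (j - u r) = n" and ij: "(i, j) \<in> D" "(i', j) \<in> D" "i < i'"
          obtain a k where ak: "c (i, j) = (a, k)" by (cases "c (i, j)")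
          obtain a' k' where ak': "c (i', j) = (a', k')" by (cases "c (i', j)")
          have aa: "a < a'" using L1[OF ij] ak ak' by simp
          show "snd (c (i', j)) \<le> snd (c (i, j))"
          proof (rule ccontr)
            assume "\<not> ?thesis"
            then have kk: "k < k'" using ak ak' by simp
            have Yak: "(a, k) \<in> Y" "(a', k') \<in> Y" using cY ij ak ak' by metis+
            have F: "(a, k') \<in> Y \<and> lr_le (b (a, k')) (i', j)"
              using F1[OF ij(2), of a k'] ak' aa Yak by (auto simp: Ymem)
            obtain p q where pq: "b (a, k') = (p, q)" by (cases "b (a, k')")
            have bak: "b (a, k) = (i, j)" using bc ij ak by metis
            have qj: "q < j" using Wp[OF Yak(1) conjunct1[OF F] kk] pq bak by simp
            have pi: "p < i'" using conjunct2[OF F] pq qj by (auto simp: lr_le_def)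
            have ip: "i \<le> p" using TWp(1)[OF Yak(1) conjunct1[OF F] kk] pq bak by simp
            have Dpq: "(p, q) \<in> D" using bD F pq by metis
            have cpq: "c (p, q) = (a, k')" using cb F pq by metis
            have Di'q: "(i', q) \<in> D" using shape1[OF Dpq ij(2) pi] qj by simp
            have "snd (c (i', q)) > k'" using W[OF Di'q ij(2) qj] ak' by simp
            moreover have "snd (c (i', q)) \<le> k'"
            proof -
              have "u r < q" using Dpq um[of p r] by (auto simp: Dmem)
              then have "nat (q - u r) < n" using n qj by simp
              then show ?thesis using less.IH Dpq Di'q pi cpq by (metis snd_conv)
            qed
            ultimately show False by simp
          qed
        qed
      qed
      then show ?thesis using that by blast
    qed
    have THp: "snd (b (a', k)) \<le> snd (b (a, k))" if "(a, k) \<in> Y" "(a', k) \<in> Y" "a < a'" for a a' k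
    proof (rule ccontr)
      assume neg: "\<not> ?thesis"
      obtain p q where pq: "b (a, k) = (p, q)" by (cases "b (a, k)")
      obtain p' q' where pq': "b (a', k) = (p', q')" by (cases "b (a', k)")
      have qq: "q < q'" using neg pq pq' by simp
      have pp: "p < p'" using Hp[OF that] pq pq' by simp
      have D1: "(p, q) \<in> D" "(p', q') \<in> D" using bD that pq pq' by metis+
      have c1: "c (p, q) = (a, k)" "c (p', q') = (a', k)" using cb that pq pq' by metis+
      have D2: "(p, q') \<in> D" using shape2[OF D1 pp qq] .
      have "snd (c (p, q')) < k" using W[OF D1(1) D2 qq] c1 by simp
      moreover have "k \<le> snd (c (p, q'))" using TH[OF D2 D1(2) pp] c1 by simp
      ultimately show False by simp
    qed
    show "(\<forall>i i' j. (i, j) \<in> D \<longrightarrow> (i', j) \<in> D \<longrightarrow> i < i'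
        \<longrightarrow> fst (c (i, j)) < fst (c (i', j))) \<and>
     (\<forall>i i' j. (i, j) \<in> D \<longrightarrow> (i', j) \<in> D \<longrightarrow> i < i'
        \<longrightarrow> snd (c (i, j)) \<ge> snd (c (i', j))) \<and>
     (\<forall>i j j'. (i, j) \<in> D \<longrightarrow> (i, j') \<in> D \<longrightarrow> j < j'
        \<longrightarrow> snd (c (i, j)) > snd (c (i, j'))) \<and>
     (\<forall>i j j'. (i, j) \<in> D \<longrightarrow> (i, j') \<in> D \<longrightarrow> j < j'
        \<longrightarrow> fst (c (i, j)) \<le> fst (c (i, j'))) \<and>
     (\<forall>i i' j. (i, j) \<in> Y \<longrightarrow> (i', j) \<in> Y \<longrightarrow> i < i'
        \<longrightarrow> fst (b (i, j)) < fst (b (i', j))) \<and>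
     (\<forall>i i' j. (i, j) \<in> Y \<longrightarrow> (i', j) \<in> Y \<longrightarrow> i < i'
        \<longrightarrow> snd (b (i, j)) \<ge> snd (b (i', j))) \<and>
     (\<forall>i j j'. (i, j) \<in> Y \<longrightarrow> (i, j') \<in> Y \<longrightarrow> j < j'
        \<longrightarrow> snd (b (i, j)) > snd (b (i, j'))) \<and>
     (\<forall>i j j'. (i, j) \<in> Y \<longrightarrow> (i, j') \<in> Y \<longrightarrow> j < j'
        \<longrightarrow> fst (b (i, j)) \<le> fst (b (i, j')))"
      using L1 TH W L2 Hp THp Wp TWp(1) by blast
  next
    assume R: "(\<forall>i i' j. (i, j) \<in> D \<longrightarrow> (i', j) \<in> D \<longrightarrow> i < i'
        \<longrightarrow> fst (c (i, j)) < fst (c (i', j))) \<and>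
     (\<forall>i i' j. (i, j) \<in> D \<longrightarrow> (i', j) \<in> D \<longrightarrow> i < i'
        \<longrightarrow> snd (c (i, j)) \<ge> snd (c (i', j))) \<and>
     (\<forall>i j j'. (i, j) \<in> D \<longrightarrow> (i, j') \<in> D \<longrightarrow> j < j'
        \<longrightarrow> snd (c (i, j)) > snd (c (i, j'))) \<and>
     (\<forall>i j j'. (i, j) \<in> D \<longrightarrow> (i, j') \<in> D \<longrightarrow> j < j'
        \<longrightarrow> fst (c (i, j)) \<le> fst (c (i, j'))) \<and>
     (\<forall>i i' j. (i, j) \<in> Y \<longrightarrow> (i', j) \<in> Y \<longrightarrow> i < i'
        \<longrightarrow> fst (b (i, j)) < fst (b (i', j))) \<and>
     (\<forall>i i' j. (i, j) \<in> Y \<longrightarrow> (i', j) \<in> Y \<longrightarrow> i < i'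
        \<longrightarrow> snd (b (i, j)) \<ge> snd (b (i', j))) \<and>
     (\<forall>i j j'. (i, j) \<in> Y \<longrightarrow> (i, j') \<in> Y \<longrightarrow> j < j'
        \<longrightarrow> snd (b (i, j)) > snd (b (i, j'))) \<and>
     (\<forall>i j j'. (i, j) \<in> Y \<longrightarrow> (i, j') \<in> Y \<longrightarrow> j < j'
        \<longrightarrow> fst (b (i, j)) \<le> fst (b (i, j')))"
    have Hp: "\<And>a a' k. (a, k) \<in> Y \<Longrightarrow> (a', k) \<in> Y \<Longrightarrow> a < a' \<Longrightarrow> fst (b (a, k)) < fst (b (a', k))"
      using R by blast
    have Wp: "\<And>a k k'. (a, k) \<in> Y \<Longrightarrow> (a, k') \<in> Y \<Longrightarrow> k < k' \<Longrightarrow> snd (b (a, k)) > snd (b (a, k'))"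
      using R by blast
    have TWp: "\<And>a k k'. (a, k) \<in> Y \<Longrightarrow> (a, k') \<in> Y \<Longrightarrow> k < k' \<Longrightarrow> fst (b (a, k)) \<le> fst (b (a, k'))"
      using R by blast
    have lk: "lr_le (b (a, k)) (b (a, k'))" if "(a, k) \<in> Y" "(a, k') \<in> Y" "k \<le> k'" for a k k'
    proof (cases "k = k'")
      case True thus ?thesis by (simp add: lr_le_refl)
    next
      case False
      then have "k < k'" using that by simp
      thus ?thesis using Wp[OF that(1,2)] TWp[OF that(1,2)] by (auto simp: lr_le_def)
    qed
    have la: "lr_le (b (a, k)) (b (a', k))" if "(a, k) \<in> Y" "(a', k) \<in> Y" "a \<le> a'" for a a' k
    proof (cases "a = a'")
      case True thus ?thesis by (simp add: lr_le_refl)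
    next
      case False
      then have "a < a'" using that by simp
      thus ?thesis using Hp[OF that(1,2)] by (auto simp: lr_le_def)
    qed
    have Yg: "is_young_diagram (c ` {y \<in> D. lr_le y x})" for x
    proof (rule young_char)
      show "finite (c ` {y \<in> D. lr_le y x})" using finD by simp
      show "1 \<le> a \<and> 1 \<le> k" if H: "(a, k) \<in> c ` {y \<in> D. lr_le y x}" for a k
      proof -
        obtain z where "z \<in> D" "(a, k) = c z" using H by blast
        then have "(a, k) \<in> Y" using cY by metis
        thus ?thesis by (simp add: Ymem)
      qed
      show "(a, k) \<in> c ` {y \<in> D. lr_le y x}"
        if A: "(a', k') \<in> c ` {y \<in> D. lr_le y x}" "1 \<le> a" "a \<le> a'" "1 \<le> k" "k \<le> k'" for a k a' k'
      proof -
        obtain z where z: "z \<in> D" "lr_le z x" "(a', k') = c z" using A(1) by blast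
        have Y1: "(a', k') \<in> Y" using cY z by metis
        have Y2: "(a, k') \<in> Y" using Yd[OF Y1 A(2,3)] Y1 by (auto simp: Ymem)
        have Y3: "(a, k) \<in> Y" using Yd[OF Y1 A(2,3,4,5)] .
        have "lr_le (b (a, k)) x"
          using lr_le_trans[OF lk[OF Y3 Y2 A(5)] lr_le_trans[OF la[OF Y2 Y1 A(3)]]] bc z by metis
        then have "b (a, k) \<in> {y \<in> D. lr_le y x}" using bD Y3 by blast
        then show ?thesis using cb Y3 by (metis image_eqI)
      qed
    qed
    have L1: "\<forall>i i' j. (i, j) \<in> D \<longrightarrow> (i', j) \<in> D \<longrightarrow> i < i'
        \<longrightarrow> fst (c (i, j)) < fst (c (i', j))" using conjunct1[OF R] .
    have L2: "\<forall>i j j'. (i, j) \<in> D \<longrightarrow> (i, j') \<in> D \<longrightarrow> j < j'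
        \<longrightarrow> fst (c (i, j)) \<le> fst (c (i, j'))" using conjunct1[OF conjunct2[OF conjunct2[OF conjunct2[OF R]]]] .
    show "LR_rules r w u c" unfolding LR_rules_def D_def[symmetric] using L1 L2 Yg by blast
  qed
qed

end
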